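(* Let $(\mathcal Q,d)$ be a Hadamard space, $Y$ a $\mathcal Q$-valued random variable, $o\in\mathcal Q$, and $\tau\in\mathcal S_0^+$ with $\mathbb E[\tau'(d(Y,o))]<\infty$. Let $m\in\arg\min_{q\in\mathcal Q}\mathbb E[\tau(d(Y,q))-\tau(d(Y,o))]$ and $x_0:=\inf\{x\in(0,\infty):\tau'^{\oplus}(x)=0\}$ (with $\inf\emptyset=\infty$). If $\mathbb P(d(Y,m)<x_0)>0$, then $m$ is the only $\tau$-Fréchet mean of $Y$. In particular, if $\tau'^{\oplus}(x)>0$ for all $x\in(0,\infty)$, the $\tau$-Fréchet mean is unique.
   Context: A Hadamard space is a complete metric space $(\mathcal Q,d)$ such that for all $y_0,y_1$ there is $m$ with $\frac12 d(y_0,q)^2+\frac12 d(y_1,q)^2-\frac14 d(y_0,y_1)^2\ge d(q,m)^2$ for all $q$. $\mathcal S_0^+$ is the set of nondecreasing convex $\tau:[0,\infty)\to\mathbb R$, differentiable on $(0,\infty)$ with concave derivative $\tau'$ (with $\tau'(0):=\lim_{x\searrow0}\tau'(x)$), $\tau(0)=0$ and $\tau'(x)>0$ for $x>0$; $\tau'^{\oplus}$ is the right derivative of $\tau'$. A $\tau$-Fréchet mean of $Y$ is an element of $\arg\min_{q}\mathbb E[\tau(d(Y,q))-\tau(d(Y,o))]$. *)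

theory Defs
  imports "HOL-Probability.Probability"
begin

definition hadamard_space :: "'a::metric_space set \<Rightarrow> bool" where
  "hadamard_space Q \<longleftrightarrow> Topological_Spaces.complete Q \<and>
     (\<forall>y0\<in>Q. \<forall>y1\<in>Q. \<exists>m\<in>Q. \<forall>q\<in>Q.
        (1/2) * (dist y0 q)\<^sup>2 + (1/2) * (dist y1 q)\<^sup>2 - (1/4) * (dist y0 y1)\<^sup>2 \<ge> (dist q m)\<^sup>2)"

definition S0plus :: "(real \<Rightarrow> real) \<Rightarrow> (real \<Rightarrow> real) \<Rightarrow> bool" where
  "S0plus \<tau> \<tau>' \<longleftrightarrow>
     mono_on {0..} \<tau> \<and> convex_on {0..} \<tau> \<and>
     (\<forall>x>0. (\<tau> has_real_derivative \<tau>' x) (at x)) \<and>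
     concave_on {0<..} \<tau>' \<and>
     (\<tau>' \<longlongrightarrow> \<tau>' 0) (at_right 0) \<and>
     \<tau> 0 = 0 \<and> (\<forall>x>0. \<tau>' x > 0)"

definition rderiv :: "(real \<Rightarrow> real) \<Rightarrow> real \<Rightarrow> real" where
  "rderiv f x = Lim (at_right 0) (\<lambda>h. (f (x + h) - f x) / h)"

definition frechet_obj :: "'b measure \<Rightarrow> ('b \<Rightarrow> 'a::metric_space) \<Rightarrow> (real \<Rightarrow> real) \<Rightarrow> 'a \<Rightarrow> 'a \<Rightarrow> real" where
  "frechet_obj M Y \<tau> ob q = (\<integral>\<omega>. \<tau> (dist (Y \<omega>) q) - \<tau> (dist (Y \<omega>) ob) \<partial>M)"

definition tau_frechet_mean :: "'b measure \<Rightarrow> ('b \<Rightarrow> 'a::metric_space) \<Rightarrow> (real \<Rightarrow> real) \<Rightarrow> 'a \<Rightarrow> 'a \<Rightarrow> bool" where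
  "tau_frechet_mean M Y \<tau> ob m \<longleftrightarrow> (\<forall>q. frechet_obj M Y \<tau> ob m \<le> frechet_obj M Y \<tau> ob q)"

end

theory Submission
  imports Defs
begin

lemma S0_tangent:
  assumes S: "S0plus \<tau> \<tau>'" and x: "x > 0" and y: "y \<ge> 0"
  shows "\<tau> y \<ge> \<tau> x + \<tau>' x * (y - x)"
proof -
  have cv: "convex_on {0..} \<tau>" and d: "(\<tau> has_real_derivative \<tau>' x) (at x)"
    using S x by (auto simp: S0plus_def)
  have "\<tau> y - \<tau> x \<ge> \<tau>' x * (y - x)"
    by (rule convex_on_imp_above_tangent[OF cv]) (use x y d has_field_derivative_at_within in auto)
  then show ?thesis by simp
qed

lemma S0_mono': 
  assumes S: "S0plus \<tau> \<tau>'" and "0 < x" "x \<le> y"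
  shows "\<tau>' x \<le> \<tau>' y"
proof (cases "x = y")
  case False
  have 1: "\<tau> y \<ge> \<tau> x + \<tau>' x * (y - x)" using S0_tangent[OF S, of x y] assms by auto
  have 2: "\<tau> x \<ge> \<tau> y + \<tau>' y * (x - y)" using S0_tangent[OF S, of y x] assms by auto
  from 1 2 have "\<tau>' x * (y - x) \<le> \<tau>' y * (y - x)" by (simp add: algebra_simps)
  then show ?thesis using False assms by (simp add: mult_le_cancel_right)
qed simp

lemma S0_strict:
  assumes S: "S0plus \<tau> \<tau>'" and "0 \<le> s" "s < t"
  shows "\<tau> s < \<tau> t"
proof -
  define u where "u = (s+t)/2"
  have u: "u > 0" "s \<le> u" "u < t" using assms by (auto simp: u_def)
  have "\<tau> t \<ge> \<tau> u + \<tau>' u * (t - u)" using S0_tangent[OF S u(1), of t] assms by auto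
  moreover have "\<tau>' u * (t - u) > 0" using S u by (auto simp: S0plus_def)
  moreover have "\<tau> s \<le> \<tau> u" using S u assms by (auto simp: S0plus_def mono_on_def)
  ultimately show ?thesis by linarith
qed

lemma S0_nonneg':
  assumes S: "S0plus \<tau> \<tau>'" and "x \<ge> 0" shows "\<tau>' x \<ge> 0"
proof (cases "x = 0")
  case True
  have "(\<tau>' \<longlongrightarrow> \<tau>' 0) (at_right 0)" using S by (simp add: S0plus_def)
  moreover have "\<forall>\<^sub>F y in at_right (0::real). \<tau>' y \<ge> 0"
    using S by (auto simp: S0plus_def eventually_at_right_less intro: eventually_mono[OF eventually_at_right_less] less_imp_le)
  ultimately have "\<tau>' 0 \<ge> 0" by (intro tendsto_lowerbound) auto
  then show ?thesis using True by simp
next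
  case False then show ?thesis using S assms by (auto simp: S0plus_def intro: less_imp_le)
qed


lemma S0_const_right:
  assumes S: "S0plus \<tau> \<tau>'" and ab: "0 \<le> a" "a < b"
    and c: "\<And>x. a < x \<Longrightarrow> x < b \<Longrightarrow> \<tau>' x = k"
    and t: "t > a"
  shows "\<tau>' t = k"
proof (cases "t < b")
  case True then show ?thesis using c t by auto
next
  case False
  define s1 where "s1 = a + (b-a)/3"
  define s2 where "s2 = a + 2*(b-a)/3"
  have s: "a < s1" "s1 < s2" "s2 < b" using ab by (auto simp: s1_def s2_def field_simps)
  define th where "th = (s2 - s1)/(t - s1)"
  have th: "0 \<le> th" "th \<le> 1" "0 < th" using s False by (auto simp: th_def field_simps)
  have cc: "concave_on {0<..} \<tau>'" using S by (simp add: S0plus_def)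
  have ts: "t - s1 \<noteq> 0" using s False by auto
  have "(1 - th) * s1 + th * t = s2" proof -
    have "(1 - th) * s1 + th * t = s1 + th * (t - s1)" by (simp add: algebra_simps)
    also have "th * (t - s1) = s2 - s1" unfolding th_def using ts by simp
    finally show ?thesis by simp
  qed
  moreover have "\<tau>' ((1 - th) *\<^sub>R s1 + th *\<^sub>R t) \<ge> (1 - th) * \<tau>' s1 + th * \<tau>' t"
    by (rule concave_onD[OF cc th(1,2)]) (use s ab False in auto)
  ultimately have "k \<ge> (1 - th) * k + th * \<tau>' t" using c s by simp
  then have "th * \<tau>' t \<le> th * k" by (simp add: algebra_simps)
  then have up: "\<tau>' t \<le> k" using th by simp
  have "\<tau>' s1 \<le> \<tau>' t" using S0_mono'[OF S, of s1 t] s ab False by auto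
  then show ?thesis using up c s by auto
qed

lemma rderiv_zero:
  assumes "\<And>y. y > x \<Longrightarrow> f y = f x"
  shows "rderiv f x = 0"
  unfolding rderiv_def
proof (rule tendsto_Lim)
  show "\<not> trivial_limit (at_right (0::real))" by simp
  have "\<forall>\<^sub>F h in at_right (0::real). (f (x + h) - f x) / h = 0"
    using eventually_at_right_less[of 0] by eventually_elim (use assms in auto)
  then show "((\<lambda>h. (f (x + h) - f x) / h) \<longlongrightarrow> 0) (at_right 0)"
    by (rule tendsto_eventually)
qed

lemma S0_midstrict:
  assumes S: "S0plus \<tau> \<tau>'" and ab: "0 \<le> a" "a < b"
    and x0: "ereal a < Inf (ereal ` {x. x > 0 \<and> rderiv \<tau>' x = 0})"
  shows "\<tau> ((a+b)/2) < (\<tau> a + \<tau> b)/2"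
proof (rule ccontr)
  assume neg: "\<not> ?thesis"
  define m where "m = (a+b)/2"
  define k where "k = \<tau>' m"
  have m: "m > 0" "a < m" "m < b" using ab by (auto simp: m_def)
  have ta: "\<tau> a \<ge> \<tau> m + k * (a - m)" using S0_tangent[OF S m(1), of a] ab by (simp add: k_def)
  have tb: "\<tau> b \<ge> \<tau> m + k * (b - m)" using S0_tangent[OF S m(1), of b] ab by (simp add: k_def)
  have sum0: "k * (a - m) + k * (b - m) = 0" by (simp add: m_def algebra_simps)
  have ea: "\<tau> a = \<tau> m + k * (a - m)" and eb: "\<tau> b = \<tau> m + k * (b - m)"
    using ta tb sum0 neg by (auto simp: m_def)
  have c: "\<tau>' x = k" if x: "a < x" "x < b" for x
  proof -
    have x0: "x > 0" using x ab by auto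
    have tx: "\<tau> x \<ge> \<tau> m + k * (x - m)" using S0_tangent[OF S m(1), of x] x0 by (simp add: k_def)
    have xa: "\<tau> a \<ge> \<tau> x + \<tau>' x * (a - x)" using S0_tangent[OF S x0, of a] ab by simp
    have xb: "\<tau> b \<ge> \<tau> x + \<tau>' x * (b - x)" using S0_tangent[OF S x0, of b] ab x by simp
    have "k * (a - x) \<ge> \<tau>' x * (a - x)" using ea tx xa by (simp add: algebra_simps)
    then have 1: "(\<tau>' x - k) * (x - a) \<ge> 0" by (simp add: algebra_simps)
    have "k * (b - x) \<ge> \<tau>' x * (b - x)" using eb tx xb by (simp add: algebra_simps)
    then have 2: "(k - \<tau>' x) * (b - x) \<ge> 0" by (simp add: algebra_simps)
    from 1 x have "\<tau>' x - k \<ge> 0" by (simp add: zero_le_mult_iff)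
    moreover from 2 x have "k - \<tau>' x \<ge> 0" by (simp add: zero_le_mult_iff)
    ultimately show ?thesis by simp
  qed
  have cr: "\<tau>' t = k" if "t > a" for t using S0_const_right[OF S ab c that] by blast
  have inS: "x \<in> {x. x > 0 \<and> rderiv \<tau>' x = 0}" if "x > a" for x
    using that ab by (auto intro!: rderiv_zero simp: cr)
  have "Inf (ereal ` {x. x > 0 \<and> rderiv \<tau>' x = 0}) \<le> ereal a"
  proof (subst Inf_le_iff, intro allI impI)
    fix y assume "ereal a < y"
    then obtain z where z: "ereal a < ereal z" "ereal z < y" using ereal_dense2 by blast
    then show "\<exists>w\<in>ereal ` {x. x > 0 \<and> rderiv \<tau>' x = 0}. y > w"
      using inS[of z] by auto
  qed
  with x0 show False by simp
qed


lemma S0_shift: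
  assumes S: "S0plus \<tau> \<tau>'" and a: "a \<ge> 0" and D: "D \<ge> 0"
  shows "\<tau>' (a + D) \<le> (1 + D) * \<bar>\<tau>' a\<bar> + \<tau>' (2 + D)"
proof (cases "a < 2")
  case True
  have p: "\<tau>' (2 + D) > 0" using S D by (simp add: S0plus_def)
  show ?thesis
  proof (cases "a + D = 0")
    case True
    then have "a = 0" "D = 0" using a D by auto
    then show ?thesis using p by simp
  next
    case False
    then have "\<tau>' (a + D) \<le> \<tau>' (2 + D)" using S0_mono'[OF S, of "a+D" "2+D"] a D \<open>a<2\<close> by auto
    moreover have "(1 + D) * \<bar>\<tau>' a\<bar> \<ge> 0" using D by simp
    ultimately show ?thesis by linarith
  qed
next
  case False
  then have a2: "a \<ge> 2" by simp
  show ?thesis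
  proof (cases "D = 0")
    case True
    have "\<tau>' 2 > 0" using S by (simp add: S0plus_def)
    then show ?thesis using True by simp
  next
    case Dn: False
    then have Dp: "D > 0" using D by simp
    define th where "th = (a - 1) / (a + D - 1)"
    have den: "a + D - 1 > 0" using a2 D by simp
    have th: "0 \<le> th" "th \<le> 1" "0 < th" using a2 Dp den by (auto simp: th_def field_simps)
    have cc: "concave_on {0<..} \<tau>'" using S by (simp add: S0plus_def)
    have comb: "(1 - th) * 1 + th * (a + D) = a"
    proof -
      have "(1 - th) * 1 + th * (a + D) = 1 + th * (a + D - 1)" by (simp add: algebra_simps)
      also have "th * (a + D - 1) = a - 1" unfolding th_def using den by simp
      finally show ?thesis by simp
    qed
    have "\<tau>' ((1 - th) *\<^sub>R 1 + th *\<^sub>R (a + D)) \<ge> (1 - th) * \<tau>' 1 + th * \<tau>' (a + D)"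
      by (rule concave_onD[OF cc th(1,2)]) (use a2 D in auto)
    then have 1: "\<tau>' a \<ge> (1 - th) * \<tau>' 1 + th * \<tau>' (a + D)" using comb by simp
    have "(1 - th) * \<tau>' 1 \<ge> 0" using S th by (simp add: S0plus_def less_imp_le)
    with 1 have 2: "th * \<tau>' (a + D) \<le> \<tau>' a" by linarith
    have "(1 + D) * th \<ge> 1" unfolding th_def using den a2 Dp by (simp add: field_simps)
    moreover have pa: "\<tau>' (a + D) > 0" using S a2 D by (simp add: S0plus_def)
    ultimately have "\<tau>' (a + D) \<le> ((1 + D) * th) * \<tau>' (a + D)" by simp
    also have "\<dots> = (1 + D) * (th * \<tau>' (a + D))" by simp
    also have "\<dots> \<le> (1 + D) * \<tau>' a" using 2 D by (intro mult_left_mono) auto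
    also have "\<dots> \<le> (1 + D) * \<bar>\<tau>' a\<bar>" using D by (intro mult_left_mono) auto
    finally show ?thesis using S D by (simp add: S0plus_def less_imp_le add_increasing2)
  qed
qed

lemma S0_diff_bound:
  assumes S: "S0plus \<tau> \<tau>'" and a: "a \<ge> 0" and b: "b \<ge> 0" and ab: "\<bar>b - a\<bar> \<le> D"
  shows "\<bar>\<tau> b - \<tau> a\<bar> \<le> D * ((2 + D) * \<bar>\<tau>' a\<bar> + \<tau>' (2 + D))"
proof -
  have D: "D \<ge> 0" using ab by simp
  have p2: "\<tau>' (2 + D) > 0" using S D by (simp add: S0plus_def)
  have R0: "D * \<bar>\<tau>' a\<bar> \<ge> 0" "D * (1 + D) * \<bar>\<tau>' a\<bar> \<ge> 0" "D * \<tau>' (2 + D) \<ge> 0" using D p2 by auto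
  have R: "D * ((2 + D) * \<bar>\<tau>' a\<bar> + \<tau>' (2 + D)) = D * \<bar>\<tau>' a\<bar> + D * ((1 + D) * \<bar>\<tau>' a\<bar> + \<tau>' (2 + D))"
    by (simp add: algebra_simps)
  have t0: "\<tau> 0 = 0" and mo: "mono_on {0..} \<tau>" using S by (auto simp: S0plus_def)
  have up: "\<tau> b - \<tau> a \<le> D * ((1 + D) * \<bar>\<tau>' a\<bar> + \<tau>' (2 + D))"
  proof (cases "b > 0")
    case True
    have "\<tau> a \<ge> \<tau> b + \<tau>' b * (a - b)" using S0_tangent[OF S True a] .
    then have "\<tau> b - \<tau> a \<le> \<tau>' b * (b - a)" by (simp add: algebra_simps)
    also have "\<dots> \<le> \<tau>' b * D" using True S ab by (intro mult_left_mono) (auto simp: S0plus_def less_imp_le)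
    also have "\<dots> \<le> \<tau>' (a + D) * D" using S0_mono'[OF S True, of "a + D"] ab D by (intro mult_right_mono) auto
    also have "\<dots> \<le> ((1 + D) * \<bar>\<tau>' a\<bar> + \<tau>' (2 + D)) * D" using S0_shift[OF S a D] D by (intro mult_right_mono) auto
    finally show ?thesis by (simp add: mult.commute)
  next
    case False
    then have "b = 0" using b by simp
    moreover have "\<tau> a \<ge> 0" using mo a t0 by (metis atLeast_iff mono_onD order_refl)
    moreover have "D * ((1 + D) * \<bar>\<tau>' a\<bar> + \<tau>' (2 + D)) \<ge> 0" using D p2 by simp
    ultimately show ?thesis using t0 by simp
  qed
  have lo: "\<tau> a - \<tau> b \<le> D * \<bar>\<tau>' a\<bar>"
  proof (cases "a > 0")
    case True
    have "\<tau> b \<ge> \<tau> a + \<tau>' a * (b - a)" using S0_tangent[OF S True b] .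
    then have "\<tau> a - \<tau> b \<le> \<tau>' a * (a - b)" by (simp add: algebra_simps)
    also have "\<dots> \<le> \<tau>' a * D" using True S ab by (intro mult_left_mono) (auto simp: S0plus_def less_imp_le)
    also have "\<dots> \<le> D * \<bar>\<tau>' a\<bar>" using D by (simp add: mult.commute mult_left_mono)
    finally show ?thesis .
  next
    case False
    then have "a = 0" using a by simp
    moreover have "\<tau> b \<ge> 0" using mo b t0 by (metis atLeast_iff mono_onD order_refl)
    ultimately show ?thesis using R0 t0 by simp
  qed
  have R1: "D * ((1 + D) * \<bar>\<tau>' a\<bar> + \<tau>' (2 + D)) \<ge> 0" using D p2 by simp
  show ?thesis unfolding R abs_le_iff using up lo R0(1) R1 by linarith
qed


lemma S0_pointwise:
  assumes S: "S0plus \<tau> \<tau>'" and e: "e \<ge> 0" and a: "a \<ge> 0" and b: "b \<ge> 0" and d: "\<delta> > 0"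
    and ab: "\<bar>a - b\<bar> \<le> \<delta>" and h: "e\<^sup>2 \<le> (1/2) * a\<^sup>2 + (1/2) * b\<^sup>2 - (1/4) * \<delta>\<^sup>2"
  shows "\<tau> e \<le> (\<tau> a + \<tau> b)/2"
    and "ereal a < Inf (ereal ` {x. x > 0 \<and> rderiv \<tau>' x = 0}) \<Longrightarrow> \<tau> e < (\<tau> a + \<tau> b)/2"
proof -
  have mo: "mono_on {0..} \<tau>" and cv: "convex_on {0..} \<tau>" using S by (auto simp: S0plus_def)
  have sq: "(a - b)\<^sup>2 \<le> \<delta>\<^sup>2" using ab by (metis abs_le_square_iff abs_of_pos d)
  have "e\<^sup>2 \<le> ((a + b)/2)\<^sup>2" using h sq by (simp add: power2_eq_square field_simps)
  then have em: "e \<le> (a + b)/2" by (rule power2_le_imp_le) (use a b in simp)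
  have "\<tau> e \<le> \<tau> ((a + b)/2)" using mo em e a b by (auto intro: mono_onD)
  also have "\<tau> ((1 - 1/2) *\<^sub>R a + (1/2) *\<^sub>R b) \<le> (1 - 1/2) * \<tau> a + (1/2) * \<tau> b"
    by (rule convex_onD[OF cv]) (use a b in auto)
  then have "\<tau> ((a + b)/2) \<le> (\<tau> a + \<tau> b)/2" by (simp add: field_simps)
  finally show "\<tau> e \<le> (\<tau> a + \<tau> b)/2" .
  assume x0: "ereal a < Inf (ereal ` {x. x > 0 \<and> rderiv \<tau>' x = 0})"
  show "\<tau> e < (\<tau> a + \<tau> b)/2"
  proof (cases a b rule: linorder_cases)
    case equal
    have "\<delta>\<^sup>2 > 0" using d by simp
    moreover have "e\<^sup>2 \<le> a\<^sup>2 - \<delta>\<^sup>2/4" using h equal by simp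
    ultimately have "e\<^sup>2 < a\<^sup>2" by linarith
    then have "e < a" using a by (rule power_less_imp_less_base) 
    then show ?thesis using S0_strict[OF S e] equal by simp
  next
    case less
    have "\<tau> ((a + b)/2) < (\<tau> a + \<tau> b)/2" using S0_midstrict[OF S a less x0] .
    then show ?thesis using mo em e a b by (smt (verit) atLeast_iff mono_onD)
  next
    case greater
    have "ereal b < ereal a" using greater by simp
    then have "ereal b < Inf (ereal ` {x. x > 0 \<and> rderiv \<tau>' x = 0})" using x0
      by (rule order.strict_trans)
    then have "\<tau> ((b + a)/2) < (\<tau> b + \<tau> a)/2" using S0_midstrict[OF S b greater] by blast
    then show ?thesis using mo em e a b by (smt (verit) atLeast_iff mono_onD)
  qed
qed


lemma S0_meas:
  fixes Y :: "'b \<Rightarrow> 'a::metric_space"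
  assumes S: "S0plus \<tau> \<tau>'" and Y: "Y \<in> measurable M borel"
  shows "(\<lambda>\<omega>. \<tau> (dist (Y \<omega>) q)) \<in> borel_measurable M"
proof -
  have mo: "mono_on {0..} \<tau>" using S by (simp add: S0plus_def)
  have m: "mono (\<lambda>x. \<tau> (max 0 x))"
  proof (rule monoI)
    fix x y :: real assume "x \<le> y"
    then have "max 0 x \<le> max 0 y" by simp
    then show "\<tau> (max 0 x) \<le> \<tau> (max 0 y)" by (intro mono_onD[OF mo]) auto
  qed
  have d: "(\<lambda>\<omega>. dist (Y \<omega>) q) \<in> borel_measurable M"
    by (rule borel_measurable_continuous_on[OF _ Y]) (intro continuous_intros)
  have "(\<lambda>\<omega>. \<tau> (max 0 (dist (Y \<omega>) q))) \<in> borel_measurable M"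
    using measurable_comp[OF d borel_measurable_mono[OF m]] by (simp add: comp_def)
  then show ?thesis by simp
qed

lemma S0_int:
  fixes Y :: "'b \<Rightarrow> 'a::metric_space"
  assumes S: "S0plus \<tau> \<tau>'" and Y: "Y \<in> measurable M borel" and P: "prob_space M"
    and I: "integrable M (\<lambda>\<omega>. \<tau>' (dist (Y \<omega>) ob))"
  shows "integrable M (\<lambda>\<omega>. \<tau> (dist (Y \<omega>) q) - \<tau> (dist (Y \<omega>) ob))"
proof -
  define D where "D = dist q ob"
  have D: "D \<ge> 0" by (simp add: D_def)
  interpret prob_space M by (rule P)
  have i1: "integrable M (\<lambda>\<omega>. D * ((2 + D) * \<bar>\<tau>' (dist (Y \<omega>) ob)\<bar> + \<tau>' (2 + D)))"
    using I by (intro integrable_mult_right integrable_add integrable_abs) auto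
  have i2: "(\<lambda>\<omega>. \<tau> (dist (Y \<omega>) q) - \<tau> (dist (Y \<omega>) ob)) \<in> borel_measurable M"
    using S0_meas[OF S Y] by (intro borel_measurable_diff) auto
  have p2: "\<tau>' (2 + D) > 0" using S D by (simp add: S0plus_def)
  have i3: "AE \<omega> in M. norm (\<tau> (dist (Y \<omega>) q) - \<tau> (dist (Y \<omega>) ob))
          \<le> norm (D * ((2 + D) * \<bar>\<tau>' (dist (Y \<omega>) ob)\<bar> + \<tau>' (2 + D)))"
  proof (intro AE_I2)
    fix \<omega>
    have ab: "\<bar>dist (Y \<omega>) q - dist (Y \<omega>) ob\<bar> \<le> D"
      using abs_dist_diff_le[of q "Y \<omega>" ob] by (simp add: D_def dist_commute)
    have "\<bar>\<tau> (dist (Y \<omega>) q) - \<tau> (dist (Y \<omega>) ob)\<bar> \<le> D * ((2 + D) * \<bar>\<tau>' (dist (Y \<omega>) ob)\<bar> + \<tau>' (2 + D))"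
      by (rule S0_diff_bound[OF S _ _ ab]) auto
    moreover have "D * ((2 + D) * \<bar>\<tau>' (dist (Y \<omega>) ob)\<bar> + \<tau>' (2 + D)) \<ge> 0" using D p2 by simp
    ultimately show "norm (\<tau> (dist (Y \<omega>) q) - \<tau> (dist (Y \<omega>) ob))
          \<le> norm (D * ((2 + D) * \<bar>\<tau>' (dist (Y \<omega>) ob)\<bar> + \<tau>' (2 + D)))" by simp
  qed
  show ?thesis by (rule Bochner_Integration.integrable_bound[OF i1 i2 i3])
qed

lemma uniq_part:
  fixes M :: "'b measure" and Y :: "'b \<Rightarrow> 'a::metric_space"
    and ob m :: 'a and \<tau> \<tau>' :: "real \<Rightarrow> real"
  assumes H: "hadamard_space (UNIV :: 'a set)"
    and P: "prob_space M"
    and Y: "Y \<in> measurable M borel"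
    and S: "S0plus \<tau> \<tau>'"
    and I: "integrable M (\<lambda>\<omega>. \<tau>' (dist (Y \<omega>) ob))"
    and Fm: "tau_frechet_mean M Y \<tau> ob m"
    and pos: "measure M {\<omega> \<in> space M. ereal (dist (Y \<omega>) m) < Inf (ereal ` {x. x > 0 \<and> rderiv \<tau>' x = 0})} > 0"
    and Fq: "tau_frechet_mean M Y \<tau> ob q"
  shows "q = m"
proof (rule ccontr)
  assume qm: "q \<noteq> m"
  define x0 where "x0 = Inf (ereal ` {x. x > 0 \<and> rderiv \<tau>' x = 0})"
  define A where "A = {\<omega> \<in> space M. ereal (dist (Y \<omega>) m) < x0}"
  define \<delta> where "\<delta> = dist m q"
  have d: "\<delta> > 0" using qm by (simp add: \<delta>_def)
  obtain c where c: "\<And>z. (1/2) * (dist m z)\<^sup>2 + (1/2) * (dist q z)\<^sup>2 - (1/4) * (dist m q)\<^sup>2 \<ge> (dist z c)\<^sup>2"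
    using H unfolding hadamard_space_def by blast
  define f where "f = (\<lambda>p \<omega>. \<tau> (dist (Y \<omega>) p) - \<tau> (dist (Y \<omega>) ob))"
  have fi: "integrable M (f p)" for p unfolding f_def by (rule S0_int[OF S Y P I])
  define h where "h = (\<lambda>\<omega>. (f m \<omega> + f q \<omega>)/2 - f c \<omega>)"
  have a1: "integrable M (\<lambda>\<omega>. f m \<omega> + f q \<omega>)" by (rule Bochner_Integration.integrable_add[OF fi fi])
  have a2: "integrable M (\<lambda>\<omega>. (f m \<omega> + f q \<omega>)/2)" using a1 by simp
  have hi: "integrable M h" unfolding h_def by (rule Bochner_Integration.integrable_diff[OF a2 fi])
  have hpt: "h \<omega> \<ge> 0" and hpos: "\<omega> \<in> A \<Longrightarrow> h \<omega> > 0" for \<omega>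
  proof -
    have ab: "\<bar>dist (Y \<omega>) m - dist (Y \<omega>) q\<bar> \<le> \<delta>"
      using abs_dist_diff_le[of m "Y \<omega>" q] by (simp add: \<delta>_def dist_commute)
    have hh: "(dist (Y \<omega>) c)\<^sup>2 \<le> (1/2) * (dist (Y \<omega>) m)\<^sup>2 + (1/2) * (dist (Y \<omega>) q)\<^sup>2 - (1/4) * \<delta>\<^sup>2"
      using c[of "Y \<omega>"] by (simp add: \<delta>_def dist_commute)
    note pw = S0_pointwise[OF S _ _ _ d ab hh]
    have e: "h \<omega> = (\<tau> (dist (Y \<omega>) m) + \<tau> (dist (Y \<omega>) q))/2 - \<tau> (dist (Y \<omega>) c)"
      by (simp add: h_def f_def field_simps)
    show "h \<omega> \<ge> 0" using pw(1) e by simp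
    assume "\<omega> \<in> A"
    then show "h \<omega> > 0" using pw(2) e by (simp add: A_def x0_def)
  qed
  have Fdef: "frechet_obj M Y \<tau> ob p = integral\<^sup>L M (f p)" for p by (simp add: frechet_obj_def f_def)
  have "integral\<^sup>L M h = (integral\<^sup>L M (f m) + integral\<^sup>L M (f q))/2 - integral\<^sup>L M (f c)"
    unfolding h_def using fi by simp
  moreover have "integral\<^sup>L M (f m) \<le> integral\<^sup>L M (f c)" "integral\<^sup>L M (f q) \<le> integral\<^sup>L M (f m)"
    using Fm Fq by (auto simp: tau_frechet_mean_def Fdef)
  ultimately have "integral\<^sup>L M h \<le> 0" by simp
  moreover have "integral\<^sup>L M h \<ge> 0" using hpt by simp
  ultimately have "integral\<^sup>L M h = 0" by simp
  then have "AE \<omega> in M. h \<omega> = 0" using integral_nonneg_eq_0_iff_AE[OF hi] hpt by simp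
  then obtain N where N: "{\<omega> \<in> space M. \<not> h \<omega> = 0} \<subseteq> N" "emeasure M N = 0" "N \<in> sets M"
    by (rule AE_E)
  have "A \<subseteq> N"
  proof
    fix \<omega> assume w: "\<omega> \<in> A"
    then have "\<omega> \<in> space M" "h \<omega> \<noteq> 0" using hpos[OF w] by (auto simp: A_def)
    then show "\<omega> \<in> N" using N(1) by blast
  qed
  have "A \<in> sets M"
  proof (rule ccontr)
    assume "A \<notin> sets M"
    then have "measure M A = 0" by (simp add: measure_notin_sets)
    then show False using pos by (simp add: A_def x0_def)
  qed
  then have "emeasure M A = 0" using \<open>A \<subseteq> N\<close> N by (metis emeasure_mono le_zero_eq)
  then have "measure M A = 0" by (simp add: measure_def)
  then show False using pos by (simp add: A_def x0_def)
qed

theorem mainTheorem7: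
  fixes M :: "'b measure" and Y :: "'b \<Rightarrow> 'a::metric_space"
    and ob m :: 'a and \<tau> \<tau>' :: "real \<Rightarrow> real"
  assumes "hadamard_space (UNIV :: 'a set)"
    and "prob_space M"
    and "Y \<in> measurable M borel"
    and "S0plus \<tau> \<tau>'"
    and "integrable M (\<lambda>\<omega>. \<tau>' (dist (Y \<omega>) ob))"
    and "tau_frechet_mean M Y \<tau> ob m"
  shows "(measure M {\<omega> \<in> space M. ereal (dist (Y \<omega>) m) < Inf (ereal ` {x. x > 0 \<and> rderiv \<tau>' x = 0})} > 0
            \<longrightarrow> (\<forall>q. tau_frechet_mean M Y \<tau> ob q \<longrightarrow> q = m))
       \<and> ((\<forall>x>0. rderiv \<tau>' x > 0)
            \<longrightarrow> (\<forall>q1 q2. tau_frechet_mean M Y \<tau> ob q1 \<longrightarrow> tau_frechet_mean M Y \<tau> ob q2 \<longrightarrow> q1 = q2))"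
proof (intro conjI impI allI)
  fix q assume "measure M {\<omega> \<in> space M. ereal (dist (Y \<omega>) m) < Inf (ereal ` {x. x > 0 \<and> rderiv \<tau>' x = 0})} > 0"
    "tau_frechet_mean M Y \<tau> ob q"
  then show "q = m" using uniq_part[OF assms] by blast
next
  fix q1 q2 assume r: "\<forall>x>0. rderiv \<tau>' x > 0" and q: "tau_frechet_mean M Y \<tau> ob q1" "tau_frechet_mean M Y \<tau> ob q2"
  interpret prob_space M by (rule assms(2))
  have E: "{x. x > 0 \<and> rderiv \<tau>' x = 0} = {}" using r by (auto simp: less_irrefl)
  have II: "Inf (ereal ` {x. x > 0 \<and> rderiv \<tau>' x = 0}) = \<infinity>" unfolding E by (simp add: top_ereal_def)
  have "{\<omega> \<in> space M. ereal (dist (Y \<omega>) m) < Inf (ereal ` {x. x > 0 \<and> rderiv \<tau>' x = 0})} = space M"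
    unfolding II by auto
  then have pos: "measure M {\<omega> \<in> space M. ereal (dist (Y \<omega>) m) < Inf (ereal ` {x. x > 0 \<and> rderiv \<tau>' x = 0})} > 0"
    by (simp add: prob_space)
  show "q1 = q2" using uniq_part[OF assms pos q(1)] uniq_part[OF assms pos q(2)] by simp
qed

end
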